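(* Let $p\in\mathbb{R}\langle x_1,\dots,x_m\rangle$ be a multilinear polynomial evaluated on the real quaternion algebra $\mathbb{H}$. Then $\operatorname{Im} p$ is one of $\{0\}$, $\mathbb{R}$ (the scalar quaternions), $V$ (the pure quaternions), or $\mathbb{H}$.
   Context: $\mathbb{H}=\langle 1,i,j,k\rangle_{\mathbb{R}}$ with $i^2=j^2=k^2=-1$, $ij=-ji=k$, $jk=-kj=i$, $ki=-ik=j$. Scalars are $\mathbb{R}1$ and $V=\mathbb{R}i+\mathbb{R}j+\mathbb{R}k$ is the space of pure quaternions. A polynomial is multilinear if it has the form $\sum_{\sigma\in S_m}c_\sigma x_{\sigma(1)}\cdots x_{\sigma(m)}$ with real $c_\sigma$; $\operatorname{Im} p=\{p(a_1,\dots,a_m):a_i\in\mathbb{H}\}$. *)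

theory Defs
  imports "HOL-Combinatorics.Permutations" Complex_Main
begin

datatype quat = Quat (Re: real) (Im1: real) (Im2: real) (Im3: real)

lemma quat_eq_iff: "x = y \<longleftrightarrow> Re x = Re y \<and> Im1 x = Im1 y \<and> Im2 x = Im2 y \<and> Im3 x = Im3 y"
  by (cases x; cases y) auto

instantiation quat :: ring_1
begin
definition "0 = Quat 0 0 0 0"
definition "1 = Quat 1 0 0 0"
definition "x + y = Quat (Re x + Re y) (Im1 x + Im1 y) (Im2 x + Im2 y) (Im3 x + Im3 y)"
definition "x - y = Quat (Re x - Re y) (Im1 x - Im1 y) (Im2 x - Im2 y) (Im3 x - Im3 y)"
definition "- x = Quat (- Re x) (- Im1 x) (- Im2 x) (- Im3 x)"
definition "x * y = Quat
   (Re x * Re y - Im1 x * Im1 y - Im2 x * Im2 y - Im3 x * Im3 y)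
   (Re x * Im1 y + Im1 x * Re y + Im2 x * Im3 y - Im3 x * Im2 y)
   (Re x * Im2 y - Im1 x * Im3 y + Im2 x * Re y + Im3 x * Im1 y)
   (Re x * Im3 y + Im1 x * Im2 y - Im2 x * Im1 y + Im3 x * Re y)"
instance
  by standard (auto simp: quat_eq_iff zero_quat_def one_quat_def plus_quat_def minus_quat_def
                 uminus_quat_def times_quat_def algebra_simps)
end

instantiation quat :: real_algebra_1
begin
definition "scaleR r x = Quat (r * Re x) (r * Im1 x) (r * Im2 x) (r * Im3 x)"
instance
  by standard (auto simp: quat_eq_iff zero_quat_def one_quat_def plus_quat_def minus_quat_def
                 uminus_quat_def times_quat_def scaleR_quat_def algebra_simps)
end

definition qi :: quat where "qi = Quat 0 1 0 0"
definition qj :: quat where "qj = Quat 0 0 1 0"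
definition qk :: quat where "qk = Quat 0 0 0 1"

lemma quat_units: "qi * qi = -1" "qj * qj = -1" "qk * qk = -1"
  "qi * qj = qk" "qj * qi = - qk" "qj * qk = qi" "qk * qj = - qi" "qk * qi = qj" "qi * qk = - qj"
  by (simp_all add: qi_def qj_def qk_def times_quat_def one_quat_def uminus_quat_def)

definition scalar_quats :: "quat set" where "scalar_quats = range of_real"
definition pure_quats :: "quat set" where "pure_quats = {q. Re q = 0}"

text \<open>A multilinear polynomial in \<open>x_1,\<dots>,x_m\<close> (indexed here as \<open>x_0,\<dots>,x_{m-1}\<close>) is
 \<open>\<Sum>\<^sub>\<sigma> c_\<sigma> x_{\<sigma>(1)}\<cdots>x_{\<sigma>(m)}\<close>, given by its real coefficient function \<open>c\<close> on permutations.\<close>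
definition mpoly_eval :: "nat \<Rightarrow> ((nat \<Rightarrow> nat) \<Rightarrow> real) \<Rightarrow> (nat \<Rightarrow> 'a::real_algebra_1) \<Rightarrow> 'a" where
  "mpoly_eval m c a = (\<Sum>\<sigma> | \<sigma> permutes {..<m}. c \<sigma> *\<^sub>R prod_list (map (\<lambda>i. a (\<sigma> i)) [0..<m]))"

definition mpoly_image :: "nat \<Rightarrow> ((nat \<Rightarrow> nat) \<Rightarrow> real) \<Rightarrow> 'a::real_algebra_1 set" where
  "mpoly_image m c = range (mpoly_eval m c)"

end

theory Submission
  imports Defs "HOL-Computational_Algebra.Polynomial"
begin


lemma qc[simp]:
  "Re 0 = 0" "Im1 0 = 0" "Im2 0 = 0" "Im3 0 = 0"
  "Re 1 = 1" "Im1 1 = 0" "Im2 1 = 0" "Im3 1 = 0"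
  "Re (x+y) = Re x + Re y" "Im1 (x+y) = Im1 x + Im1 y" "Im2 (x+y) = Im2 x + Im2 y" "Im3 (x+y) = Im3 x + Im3 y"
  "Re (x-y) = Re x - Re y" "Im1 (x-y) = Im1 x - Im1 y" "Im2 (x-y) = Im2 x - Im2 y" "Im3 (x-y) = Im3 x - Im3 y"
  "Re (-x) = - Re x" "Im1 (-x) = - Im1 x" "Im2 (-x) = - Im2 x" "Im3 (-x) = - Im3 x"
  "Re (s *\<^sub>R x) = s * Re x" "Im1 (s *\<^sub>R x) = s * Im1 x" "Im2 (s *\<^sub>R x) = s * Im2 x" "Im3 (s *\<^sub>R x) = s * Im3 x"
  "Re (of_real s) = s" "Im1 (of_real s :: quat) = 0" "Im2 (of_real s :: quat) = 0" "Im3 (of_real s :: quat) = 0"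
  "Re qi = 0" "Im1 qi = 1" "Im2 qi = 0" "Im3 qi = 0"
  "Re qj = 0" "Im1 qj = 0" "Im2 qj = 1" "Im3 qj = 0"
  "Re qk = 0" "Im1 qk = 0" "Im2 qk = 0" "Im3 qk = 1"
  by (simp_all add: zero_quat_def one_quat_def plus_quat_def minus_quat_def uminus_quat_def
      scaleR_quat_def of_real_def qi_def qj_def qk_def)

lemma qmult:
  "Re (x*y) = Re x * Re y - Im1 x * Im1 y - Im2 x * Im2 y - Im3 x * Im3 y"
  "Im1 (x*y) = Re x * Im1 y + Im1 x * Re y + Im2 x * Im3 y - Im3 x * Im2 y"
  "Im2 (x*y) = Re x * Im2 y - Im1 x * Im3 y + Im2 x * Re y + Im3 x * Im1 y"
  "Im3 (x*y) = Re x * Im3 y + Im1 x * Im2 y - Im2 x * Im1 y + Im3 x * Re y"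
  by (simp_all add: times_quat_def)




lemma prod_list_upd:
  fixes a :: "nat \<Rightarrow> 'a::real_algebra_1"
  shows "distinct ys \<Longrightarrow> r \<in> set ys \<Longrightarrow>
   prod_list (map (a(r := x + s *\<^sub>R y)) ys) = prod_list (map (a(r:=x)) ys) + s *\<^sub>R prod_list (map (a(r:=y)) ys)"
proof (induction ys)
  case Nil then show ?case by simp
next
  case (Cons h ys)
  show ?case
  proof (cases "h = r")
    case True
    then have "r \<notin> set ys" using Cons by auto
    then have e: "\<And>z. map (a(r:=z)) ys = map a ys" by (auto intro: map_cong)
    show ?thesis using True by (simp only: list.map prod_list.Cons fun_upd_same e) (simp add: distrib_right)
  next
    case False
    then have "r \<in> set ys" "distinct ys" using Cons by auto
    then show ?thesis using False Cons.IH by (simp add: distrib_left)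
  qed
qed


lemma perm_list:
  assumes "\<sigma> permutes {..<m}"
  shows "distinct (map \<sigma> [0..<m])" "set (map \<sigma> [0..<m]) = {..<m}"
proof -
  have "inj_on \<sigma> {..<m}" using assms permutes_inj_on by blast
  then show "distinct (map \<sigma> [0..<m])" by (simp add: distinct_map atLeast0LessThan)
  show "set (map \<sigma> [0..<m]) = {..<m}" using permutes_image[OF assms] by (simp add: atLeast0LessThan)
qed

lemma mpoly_slot:
  assumes "r < m"
  shows "mpoly_eval m c (a(r := x + s *\<^sub>R y)) = mpoly_eval m c (a(r:=x)) + s *\<^sub>R mpoly_eval m c (a(r:=y))"
proof -
  have "\<And>\<sigma>. \<sigma> permutes {..<m} \<Longrightarrow> c \<sigma> *\<^sub>R prod_list (map (\<lambda>i. (a(r := x + s *\<^sub>R y)) (\<sigma> i)) [0..<m])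
     = c \<sigma> *\<^sub>R prod_list (map (\<lambda>i. (a(r := x)) (\<sigma> i)) [0..<m]) + s *\<^sub>R (c \<sigma> *\<^sub>R prod_list (map (\<lambda>i. (a(r := y)) (\<sigma> i)) [0..<m]))"
  proof -
    fix \<sigma> assume h: "\<sigma> permutes {..<m}"
    have e: "\<And>b. map (\<lambda>i. b (\<sigma> i)) [0..<m] = map b (map \<sigma> [0..<m])" by simp
    show "?thesis \<sigma>" unfolding e
      apply (subst prod_list_upd)
      using perm_list[OF h] assms by (auto simp: scaleR_add_right)
  qed
  then show ?thesis unfolding mpoly_eval_def
    by (simp add: sum.distrib scaleR_sum_right)
qed




lemma prod_list_conj:
  fixes u u' :: "'a::ring_1"
  assumes "u * u' = 1" "u' * u = 1"
  shows "prod_list (map (\<lambda>i. u * a i * u') ys) = u * prod_list (map a ys) * u'"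
proof (induction ys)
  case Nil then show ?case using assms by simp
next
  case (Cons h ys)
  have "u * a h * u' * (u * prod_list (map a ys) * u') = u * a h * (u' * u) * prod_list (map a ys) * u'"
    by (simp add: mult.assoc)
  then show ?case using Cons assms by (simp add: mult.assoc)
qed

lemma mpoly_conj:
  fixes u u' :: "'a::real_algebra_1"
  assumes "u * u' = 1" "u' * u = 1"
  shows "mpoly_eval m c (\<lambda>i. u * a i * u') = u * mpoly_eval m c a * u'"
  unfolding mpoly_eval_def
  using prod_list_conj[OF assms, of "\<lambda>i. a (_ i)"]
  by (simp add: prod_list_conj[OF assms] sum_distrib_left sum_distrib_right)

lemma mpoly_zero_slot:
  assumes "r < m"
  shows "mpoly_eval m c (a(r := 0)) = 0"
proof -
  have "mpoly_eval m c (a(r := 0 + 1 *\<^sub>R 0)) = mpoly_eval m c (a(r:=0)) + 1 *\<^sub>R mpoly_eval m c (a(r:=0))"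
    using mpoly_slot[OF assms] by blast
  then show ?thesis by simp
qed

lemma mpoly_scale:
  assumes "r < m"
  shows "mpoly_eval m c (a(r := s *\<^sub>R x)) = s *\<^sub>R mpoly_eval m c (a(r := x))"
  using mpoly_slot[OF assms, where a=a and x=0 and s=s and y=x and c=c] mpoly_zero_slot[OF assms] by simp

lemma mpoly_scale_img:
  assumes "1 \<le> m"
  shows "s *\<^sub>R mpoly_eval m c a \<in> range (mpoly_eval m c :: _ \<Rightarrow> 'a::real_algebra_1)"
proof -
  have "mpoly_eval m c (a(0 := s *\<^sub>R a 0)) = s *\<^sub>R mpoly_eval m c (a(0 := a 0))"
    using mpoly_scale assms by (metis One_nat_def less_eq_Suc_le)
  then show ?thesis by (metis fun_upd_triv rangeI)
qed

lemma of_real_comm: "(of_real s :: quat) * x = x * of_real s"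
  by (simp add: quat_eq_iff qmult)

definition qcnj :: "quat \<Rightarrow> quat" where "qcnj x = Quat (Re x) (- Im1 x) (- Im2 x) (- Im3 x)"
definition nsq :: "quat \<Rightarrow> real" where "nsq x = Re x ^ 2 + Im1 x ^ 2 + Im2 x ^ 2 + Im3 x ^ 2"




lemma cnj_mult: "x * qcnj x = of_real (nsq x)" "qcnj x * x = of_real (nsq x)"
  by (simp_all add: quat_eq_iff qmult qcnj_def nsq_def power2_eq_square)
lemma nsq_pos: "x \<noteq> 0 \<Longrightarrow> nsq x > 0"
proof -
  assume "x \<noteq> 0"
  then have "Re x \<noteq> 0 \<or> Im1 x \<noteq> 0 \<or> Im2 x \<noteq> 0 \<or> Im3 x \<noteq> 0" by (auto simp: quat_eq_iff)
  moreover have "Re x ^ 2 \<ge> 0" "Im1 x ^ 2 \<ge> 0" "Im2 x ^ 2 \<ge> 0" "Im3 x ^ 2 \<ge> 0" by simp_all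
  ultimately show ?thesis unfolding nsq_def
    by (smt (verit) power2_less_0 zero_less_power2)
qed


lemma unit_inv:
  assumes "x \<noteq> 0"
  shows "x * ((1 / nsq x) *\<^sub>R qcnj x) = 1" "((1 / nsq x) *\<^sub>R qcnj x) * x = 1"
proof -
  have p: "nsq x > 0" using nsq_pos assms by auto
  have "x * ((1 / nsq x) *\<^sub>R qcnj x) = (1 / nsq x) *\<^sub>R (x * qcnj x)" by simp
  also have "\<dots> = 1" using p by (simp add: cnj_mult scaleR_conv_of_real flip: of_real_mult)
  finally show "x * ((1 / nsq x) *\<^sub>R qcnj x) = 1" .
  have "((1 / nsq x) *\<^sub>R qcnj x) * x = (1 / nsq x) *\<^sub>R (qcnj x * x)" by simp
  also have "\<dots> = 1" using p by (simp add: cnj_mult scaleR_conv_of_real flip: of_real_mult)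
  finally show "((1 / nsq x) *\<^sub>R qcnj x) * x = 1" .
qed

lemma pure_sq: "Re w = 0 \<Longrightarrow> w * w = - of_real (Im1 w ^ 2 + Im2 w ^ 2 + Im3 w ^ 2)"
  by (simp add: quat_eq_iff qmult power2_eq_square)


lemma rot:
  assumes "Re w = 0" "w \<noteq> 0" "Re v = 0"
  shows "\<exists>\<gamma> u u'. u * u' = 1 \<and> u' * u = 1 \<and> u * (\<gamma> *\<^sub>R w) * u' = v"
proof -
  define Nw where "Nw = Im1 w ^ 2 + Im2 w ^ 2 + Im3 w ^ 2"
  define Nv where "Nv = Im1 v ^ 2 + Im2 v ^ 2 + Im3 v ^ 2"
  have "Nw = nsq w" using assms by (simp add: Nw_def nsq_def)
  then have Nwp: "Nw > 0" using nsq_pos assms by auto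
  have Nvp: "Nv \<ge> 0" unfolding Nv_def by simp
  define \<gamma> where "\<gamma> = sqrt (Nv / Nw)"
  have g2: "\<gamma>^2 * Nw = Nv" unfolding \<gamma>_def using Nwp Nvp by simp
  define w1 where "w1 = \<gamma> *\<^sub>R w"
  have w1r: "Re w1 = 0" using assms by (simp add: w1_def)
  have N1: "Im1 w1 ^ 2 + Im2 w1 ^ 2 + Im3 w1 ^ 2 = Nv"
    using g2 by (simp add: w1_def Nw_def power_mult_distrib algebra_simps)
  show ?thesis
  proof (cases "v = - w1")
    case True
    show ?thesis
      apply (rule exI[of _ "-\<gamma>"], rule exI[of _ 1], rule exI[of _ 1])
      using True by (simp add: w1_def)
  next
    case False
    define u where "u = of_real Nv - v * w1"
    have u0: "u \<noteq> 0"
    proof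
      assume "u = 0"
      then have "Re u = 0" by simp
      then have "Nv + Im1 v * Im1 w1 + Im2 v * Im2 w1 + Im3 v * Im3 w1 = 0"
        using assms w1r by (simp add: u_def qmult)
      then have "(Im1 v + Im1 w1)^2 + (Im2 v + Im2 w1)^2 + (Im3 v + Im3 w1)^2 = 0"
        using N1 unfolding Nv_def by (simp add: power2_eq_square algebra_simps)
      then have "(Im1 v + Im1 w1)^2 = 0 \<and> (Im2 v + Im2 w1)^2 = 0 \<and> (Im3 v + Im3 w1)^2 = 0"
        by (smt (verit) zero_le_power2)
      then have "Im1 v = - Im1 w1" "Im2 v = - Im2 w1" "Im3 v = - Im3 w1"
        by (simp_all add: add_eq_0_iff)
      then have "v = - w1" using assms w1r by (simp add: quat_eq_iff)
      then show False using False by simp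
    qed
    have sq1: "w1 * w1 = - of_real Nv" using pure_sq[OF w1r] N1 by simp
    have sq2: "v * v = - of_real Nv" using pure_sq[OF assms(3)] unfolding Nv_def by simp
    have comm: "u * w1 = v * u"
    proof -
      have "u * w1 = of_real Nv * w1 - v * (w1 * w1)" by (simp add: u_def algebra_simps mult.assoc)
      also have "\<dots> = of_real Nv * w1 + of_real Nv * v" by (simp add: sq1 of_real_comm)
      also have "\<dots> = v * of_real Nv - (v * v) * w1" by (simp add: sq2 of_real_comm)
      also have "\<dots> = v * u" by (simp add: u_def algebra_simps mult.assoc)
      finally show ?thesis .
    qed
    define u' where "u' = (1 / nsq u) *\<^sub>R qcnj u"
    have i1: "u * u' = 1" "u' * u = 1" using unit_inv[OF u0] by (simp_all add: u'_def)
    have "u * w1 * u' = v" using comm i1 by (simp add: mult.assoc)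
    then show ?thesis using i1 unfolding w1_def by blast
  qed
qed




lemma quat_decomp: "x = (((0 + Re x *\<^sub>R 1) + Im1 x *\<^sub>R qi) + Im2 x *\<^sub>R qj) + Im3 x *\<^sub>R qk"
  by (simp add: quat_eq_iff)

lemma slot4:
  assumes "k < m"
  shows "mpoly_eval m c e = Re (e k) *\<^sub>R mpoly_eval m c (e(k:=1)) + Im1 (e k) *\<^sub>R mpoly_eval m c (e(k:=qi))
     + Im2 (e k) *\<^sub>R mpoly_eval m c (e(k:=qj)) + Im3 (e k) *\<^sub>R mpoly_eval m c (e(k:=qk))"
proof -
  have "mpoly_eval m c e = mpoly_eval m c (e(k := (((0 + Re (e k) *\<^sub>R 1) + Im1 (e k) *\<^sub>R qi) + Im2 (e k) *\<^sub>R qj) + Im3 (e k) *\<^sub>R qk))"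
    by (metis quat_decomp fun_upd_triv)
  also have "\<dots> = Re (e k) *\<^sub>R mpoly_eval m c (e(k:=1)) + Im1 (e k) *\<^sub>R mpoly_eval m c (e(k:=qi))
     + Im2 (e k) *\<^sub>R mpoly_eval m c (e(k:=qj)) + Im3 (e k) *\<^sub>R mpoly_eval m c (e(k:=qk))"
    by (simp only: mpoly_slot[OF assms] mpoly_zero_slot[OF assms] add_0_left mpoly_scale[OF assms])
  finally show ?thesis .
qed

lemma basis_reduce:
  assumes "Re (mpoly_eval m c a) \<noteq> 0"
  shows "\<exists>e. (\<forall>r<m. e r \<in> {1,qi,qj,qk}) \<and> Re (mpoly_eval m c e) \<noteq> 0"
proof -
  have "k \<le> m \<Longrightarrow> \<exists>e. (\<forall>r<k. e r \<in> {1,qi,qj,qk}) \<and> Re (mpoly_eval m c e) \<noteq> 0" for k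
  proof (induction k)
    case 0 then show ?case using assms by blast
  next
    case (Suc k)
    then obtain e where e: "\<forall>r<k. e r \<in> {1,qi,qj,qk}" "Re (mpoly_eval m c e) \<noteq> 0" by auto
    have km: "k < m" using Suc by simp
    have "\<exists>x \<in> {1,qi,qj,qk}. Re (mpoly_eval m c (e(k:=x))) \<noteq> 0"
    proof (rule ccontr)
      assume n: "\<not> ?thesis"
      have z: "Re (mpoly_eval m c (e(k:=1))) = 0" "Re (mpoly_eval m c (e(k:=qi))) = 0"
         "Re (mpoly_eval m c (e(k:=qj))) = 0" "Re (mpoly_eval m c (e(k:=qk))) = 0" using n by blast+
      have "Re (mpoly_eval m c e) = Re (e k) * Re (mpoly_eval m c (e(k:=1))) + Im1 (e k) * Re (mpoly_eval m c (e(k:=qi)))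
          + Im2 (e k) * Re (mpoly_eval m c (e(k:=qj))) + Im3 (e k) * Re (mpoly_eval m c (e(k:=qk)))"
        by (subst slot4[OF km]) (simp only: qc)
      then have "Re (mpoly_eval m c e) = 0" by (simp only: z mult_zero_right add_0_left add_0_right)
      then show False using e by simp
    qed
    then obtain x where x: "x \<in> {1,qi,qj,qk}" "Re (mpoly_eval m c (e(k:=x))) \<noteq> 0" by blast
    have "\<forall>r<Suc k. (e(k:=x)) r \<in> {1,qi,qj,qk}" using e x by (auto simp: less_Suc_eq)
    then show ?case using x(2) by blast
  qed
  then show ?thesis by blast
qed

definition bas :: "nat \<Rightarrow> nat \<Rightarrow> quat" where
  "bas p q = (if even p then (if even q then 1 else qj) else (if even q then qi else qk))"

lemma bas_mult: "bas p q * bas p' q' = bas (p+p') (q+q') \<or> bas p q * bas p' q' = - bas (p+p') (q+q')"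
  by (cases "even p"; cases "even q"; cases "even p'"; cases "even q'") (simp_all add: bas_def quat_units)

lemma bas_prod: "prod_list (map (\<lambda>r. bas (f r) (g r)) ys) \<in> {bas (sum_list (map f ys)) (sum_list (map g ys)), - bas (sum_list (map f ys)) (sum_list (map g ys))}"
proof (induction ys)
  case Nil then show ?case by (simp add: bas_def)
next
  case (Cons y ys)
  then show ?case using bas_mult[of "f y" "g y" "sum_list (map f ys)" "sum_list (map g ys)"]
    by auto
qed




lemma basis_scalar:
  assumes "\<forall>r<m. e r \<in> {1,qi,qj,qk}" "Re (mpoly_eval m c e) \<noteq> 0"
  shows "\<exists>\<mu>. mpoly_eval m c e = of_real \<mu> \<and> \<mu> \<noteq> 0"
proof -
  define f where "f r = (if e r = qi \<or> e r = qk then 1 else 0::nat)" for r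
  define g where "g r = (if e r = qj \<or> e r = qk then 1 else 0::nat)" for r
  have d: "qi \<noteq> 1" "qj \<noteq> 1" "qk \<noteq> 1" "qi \<noteq> qj" "qi \<noteq> qk" "qj \<noteq> qk"
    by (simp_all add: quat_eq_iff)
  have eb: "r < m \<Longrightarrow> e r = bas (f r) (g r)" for r
  proof -
    assume "r < m"
    then have "e r \<in> {1,qi,qj,qk}" using assms(1) by simp
    then show ?thesis using d unfolding f_def g_def bas_def by auto
  qed
  define G where "G = bas (sum f {..<m}) (sum g {..<m})"
  have tm: "prod_list (map (\<lambda>i. e (\<sigma> i)) [0..<m]) \<in> {G, -G}" if h: "\<sigma> permutes {..<m}" for \<sigma>
  proof -
    have "map (\<lambda>i. e (\<sigma> i)) [0..<m] = map (\<lambda>r. bas (f r) (g r)) (map \<sigma> [0..<m])"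
    proof -
      have "\<And>i. i < m \<Longrightarrow> e (\<sigma> i) = bas (f (\<sigma> i)) (g (\<sigma> i))"
        using eb permutes_in_image[OF h] by blast
      then show ?thesis by simp
    qed
    moreover have "sum_list (map f (map \<sigma> [0..<m])) = sum f {..<m}" "sum_list (map g (map \<sigma> [0..<m])) = sum g {..<m}"
      using perm_list[OF h] by (metis sum_list_distinct_conv_sum_set)+
    ultimately show ?thesis using bas_prod[of f g "map \<sigma> [0..<m]"] unfolding G_def by metis
  qed
  define s where "s \<sigma> = (if prod_list (map (\<lambda>i. e (\<sigma> i)) [0..<m]) = G then 1 else -1::real)" for \<sigma>
  have ts: "\<sigma> permutes {..<m} \<Longrightarrow> prod_list (map (\<lambda>i. e (\<sigma> i)) [0..<m]) = s \<sigma> *\<^sub>R G" for \<sigma>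
    using tm[of \<sigma>] unfolding s_def by auto
  have val: "mpoly_eval m c e = (\<Sum>\<sigma> | \<sigma> permutes {..<m}. c \<sigma> * s \<sigma>) *\<^sub>R G"
  proof -
    have "mpoly_eval m c e = (\<Sum>\<sigma> | \<sigma> permutes {..<m}. (c \<sigma> * s \<sigma>) *\<^sub>R G)"
      unfolding mpoly_eval_def by (rule sum.cong) (simp_all add: ts)
    then show ?thesis by (simp add: scaleR_sum_left)
  qed
  have "Re G \<noteq> 0" using assms(2) val by (metis mult_zero_right qc(21))
  then have "G = 1" unfolding G_def bas_def by (simp split: if_splits)
  then have v2: "mpoly_eval m c e = of_real (\<Sum>\<sigma> | \<sigma> permutes {..<m}. c \<sigma> * s \<sigma>)"
    using val by (simp add: of_real_def)
  moreover have "(\<Sum>\<sigma> | \<sigma> permutes {..<m}. c \<sigma> * s \<sigma>) \<noteq> 0" using v2 assms(2) by (metis of_real_0 qc(1))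
  ultimately show ?thesis by blast
qed

lemma scalar_exists:
  assumes "Re (mpoly_eval m c a) \<noteq> 0"
  shows "\<exists>b \<mu>. (mpoly_eval m c b :: quat) = of_real \<mu> \<and> \<mu> \<noteq> 0"
proof -
  obtain e where "\<forall>r<m. e r \<in> {1,qi,qj,qk}" "Re (mpoly_eval m c e) \<noteq> 0" using basis_reduce[OF assms] by blast
  then obtain \<mu> where "mpoly_eval m c e = of_real \<mu> \<and> \<mu> \<noteq> 0" using basis_scalar[of m e c] by blast
  then show ?thesis by blast
qed



lemma mpoly_cong:
  assumes "\<forall>r<m. a r = a' r"
  shows "mpoly_eval m c a = mpoly_eval m c a'"
  unfolding mpoly_eval_def
proof (rule sum.cong)
  fix \<sigma> assume "\<sigma> \<in> {\<sigma>. \<sigma> permutes {..<m}}"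
  then have h: "\<sigma> permutes {..<m}" by simp
  have "map (\<lambda>i. a (\<sigma> i)) [0..<m] = map (\<lambda>i. a' (\<sigma> i)) [0..<m]"
    by (intro map_cong refl) (use assms permutes_in_image[OF h] in auto)
  then show "c \<sigma> *\<^sub>R prod_list (map (\<lambda>i. a (\<sigma> i)) [0..<m]) = c \<sigma> *\<^sub>R prod_list (map (\<lambda>i. a' (\<sigma> i)) [0..<m])"
    by (rule arg_cong[where f="\<lambda>l. c \<sigma> *\<^sub>R prod_list l"])
qed simp

lemma poly_param:
  fixes comp :: "quat \<Rightarrow> real"
  assumes add: "\<And>x y. comp (x + y) = comp x + comp y" and sc: "\<And>s x. comp (s *\<^sub>R x) = s * comp x"
  shows "k \<le> m \<Longrightarrow> \<exists>p. \<forall>t. comp (mpoly_eval m c (\<lambda>r. if r < k then b r + t *\<^sub>R a r else b r)) = poly p t"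
proof (induction k arbitrary: b)
  case 0
  show ?case by (rule exI[of _ "[:comp (mpoly_eval m c b):]"]) simp
next
  case (Suc k)
  then have km: "k < m" by simp
  obtain p1 where p1: "\<forall>t. comp (mpoly_eval m c (\<lambda>r. if r < k then b r + t *\<^sub>R a r else b r)) = poly p1 t"
    using Suc by auto
  obtain p2 where p2: "\<forall>t. comp (mpoly_eval m c (\<lambda>r. if r < k then (b(k:=a k)) r + t *\<^sub>R a r else (b(k:=a k)) r)) = poly p2 t"
    using Suc by auto
  have "comp (mpoly_eval m c (\<lambda>r. if r < Suc k then b r + t *\<^sub>R a r else b r)) = poly (p1 + [:0,1:] * p2) t" for t
  proof -
    let ?B = "\<lambda>r. if r < k then b r + t *\<^sub>R a r else b r"
    have e1: "(\<lambda>r. if r < Suc k then b r + t *\<^sub>R a r else b r) = ?B(k := b k + t *\<^sub>R a k)"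
      by (auto simp: less_Suc_eq)
    have e2: "?B(k := b k) = ?B" by auto
    have e3: "?B(k := a k) = (\<lambda>r. if r < k then (b(k:=a k)) r + t *\<^sub>R a r else (b(k:=a k)) r)"
      by auto
    show ?thesis unfolding e1 mpoly_slot[OF km] e2 e3 add sc using p1 p2 by simp
  qed
  then show ?case by blast
qed

definition isr :: "quat \<Rightarrow> bool" where "isr q \<longleftrightarrow> Im1 q = 0 \<and> Im2 q = 0 \<and> Im3 q = 0"

lemma poly_zero_cofinite:
  fixes pf pj :: "real poly"
  assumes "poly pf 0 \<noteq> 0" "\<And>t. poly pf t \<noteq> 0 \<Longrightarrow> poly pj t = 0"
  shows "poly pj x = 0"
proof -
  have "pf \<noteq> 0" using assms(1) by auto
  then have fin: "finite {t. poly pf t = 0}" by (rule poly_roots_finite)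
  have "infinite (UNIV - {t. poly pf t = 0})"
    using fin by (simp add: Diff_infinite_finite infinite_UNIV_char_0)
  moreover have "UNIV - {t. poly pf t = 0} \<subseteq> {t. poly pj t = 0}" using assms(2) by auto
  ultimately have "infinite {t. poly pj t = 0}" using finite_subset by blast
  then have "pj = 0" using poly_roots_finite by blast
  then show ?thesis by simp
qed

lemma rigid_all:
  fixes b :: "nat \<Rightarrow> quat"
  assumes rig: "\<And>c' r x. r < m \<Longrightarrow> isr (mpoly_eval m c c') \<Longrightarrow> mpoly_eval m c c' \<noteq> 0 \<Longrightarrow> isr (mpoly_eval m c (c'(r:=x)))"
    and b: "mpoly_eval m c b = of_real \<mu>" "\<mu> \<noteq> 0"
  shows "isr (mpoly_eval m c a)"
proof -
  have "k \<le> m \<Longrightarrow> \<forall>a. isr (mpoly_eval m c (\<lambda>r. if r < k then a r else b r))" for k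
  proof (induction k)
    case 0 then show ?case using b by (simp add: isr_def)
  next
    case (Suc k)
    then have km: "k < m" and kle: "k \<le> m" by simp_all
    show ?case
    proof
      fix a :: "nat \<Rightarrow> quat"
      define d where "d r = a r - b r" for r
      define C where "C t = (\<lambda>r. if r < k then b r + t *\<^sub>R d r else b r)" for t
      define D where "D t = (\<lambda>r. if r < Suc k then b r + t *\<^sub>R d r else b r)" for t
      have Cr: "isr (mpoly_eval m c (C t))" for t
        using spec[OF Suc.IH[OF kle], of "\<lambda>r. b r + t *\<^sub>R d r"] unfolding C_def by simp
      have DC: "D t = (C t)(k := b k + t *\<^sub>R d k)" for t
        unfolding C_def D_def by (auto simp: less_Suc_eq)
      have C0: "C 0 = b" unfolding C_def by auto
      obtain pf where pf: "\<forall>t. Re (mpoly_eval m c (C t)) = poly pf t"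
        using poly_param[of Re, OF _ _ kle, of c b d] unfolding C_def by auto
      have pf0: "poly pf 0 \<noteq> 0" using pf C0 b by (metis qc(25))
      have DR: "poly pf t \<noteq> 0 \<Longrightarrow> isr (mpoly_eval m c (D t))" for t
      proof -
        assume "poly pf t \<noteq> 0"
        then have "mpoly_eval m c (C t) \<noteq> 0" using pf by (metis qc(1))
        then show ?thesis unfolding DC using rig[OF km Cr] by blast
      qed
      obtain p1 where p1: "\<forall>t. Im1 (mpoly_eval m c (D t)) = poly p1 t"
        using poly_param[of Im1, OF _ _ Suc.prems, of c b d] unfolding D_def by auto
      obtain p2 where p2: "\<forall>t. Im2 (mpoly_eval m c (D t)) = poly p2 t"
        using poly_param[of Im2, OF _ _ Suc.prems, of c b d] unfolding D_def by auto
      obtain p3 where p3: "\<forall>t. Im3 (mpoly_eval m c (D t)) = poly p3 t"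
        using poly_param[of Im3, OF _ _ Suc.prems, of c b d] unfolding D_def by auto
      have "poly p1 1 = 0" "poly p2 1 = 0" "poly p3 1 = 0"
        using poly_zero_cofinite[OF pf0] DR p1 p2 p3 unfolding isr_def by metis+
      then have "isr (mpoly_eval m c (D 1))" using p1 p2 p3 unfolding isr_def by simp
      moreover have "D 1 = (\<lambda>r. if r < Suc k then a r else b r)" unfolding D_def d_def by auto
      ultimately show "isr (mpoly_eval m c (\<lambda>r. if r < Suc k then a r else b r))" by simp
    qed
  qed
  then have "isr (mpoly_eval m c (\<lambda>r. if r < m then a r else b r))" by blast
  moreover have "mpoly_eval m c (\<lambda>r. if r < m then a r else b r) = mpoly_eval m c a"
    by (rule mpoly_cong) simp
  ultimately show ?thesis by simp
qed




lemma isr_of_real: "isr q \<Longrightarrow> q = of_real (Re q)"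
  by (simp add: isr_def quat_eq_iff)

theorem theorem1p16:
  fixes m :: nat and c :: "(nat \<Rightarrow> nat) \<Rightarrow> real"
  assumes "m \<ge> 1"
  shows "(mpoly_image m c :: quat set) = {0} \<or> (mpoly_image m c :: quat set) = scalar_quats
       \<or> (mpoly_image m c :: quat set) = pure_quats \<or> (mpoly_image m c :: quat set) = UNIV"
proof -
  define P :: "(nat \<Rightarrow> quat) \<Rightarrow> quat" where "P = mpoly_eval m c"
  have S: "(mpoly_image m c :: quat set) = range P" unfolding mpoly_image_def P_def by simp
  have m0: "0 < m" using assms by simp
  have scale: "s *\<^sub>R P a \<in> range P" for s a
    using mpoly_scale_img[OF assms] unfolding P_def by blast
  have conj: "u * P a * u' \<in> range P" if "u * u' = 1" "u' * u = 1" for u u' a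
    using mpoly_conj[OF that, of m c a] unfolding P_def by (metis rangeI)
  show ?thesis
  proof (cases "\<forall>a. Re (P a) = 0")
    case True
    show ?thesis
    proof (cases "\<forall>a. P a = 0")
      case True
      then have "range P = {0}" by auto
      then show ?thesis using S by simp
    next
      case False
      then obtain a where w: "P a \<noteq> 0" by blast
      have "range P = pure_quats"
      proof
        show "range P \<subseteq> pure_quats" using True by (auto simp: pure_quats_def)
        show "pure_quats \<subseteq> range P"
        proof
          fix v assume "v \<in> pure_quats"
          then have "Re v = 0" by (simp add: pure_quats_def)
          then obtain \<gamma> u u' where g: "u * u' = 1" "u' * u = 1" "u * (\<gamma> *\<^sub>R P a) * u' = v"
            using rot[OF _ w] True by blast
          obtain a' where "P a' = \<gamma> *\<^sub>R P a" using scale by (metis imageE)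
          then show "v \<in> range P" using conj[OF g(1,2), of a'] g(3) by simp
        qed
      qed
      then show ?thesis using S by simp
    qed
  next
    case False
    then obtain a0 where "Re (P a0) \<noteq> 0" by blast
    then obtain b \<mu> where b: "P b = of_real \<mu>" "\<mu> \<noteq> 0"
      using scalar_exists[of m c a0] unfolding P_def by blast
    show ?thesis
    proof (cases "\<exists>c' r x. r < m \<and> isr (P c') \<and> P c' \<noteq> 0 \<and> \<not> isr (P (c'(r:=x)))")
      case True
      then obtain c' r x where h: "r < m" "isr (P c')" "P c' \<noteq> 0" "\<not> isr (P (c'(r:=x)))" by blast
      define \<mu>' where "\<mu>' = Re (P c')"
      have c'v: "P c' = of_real \<mu>'" using isr_of_real[OF h(2)] unfolding \<mu>'_def .
      have \<mu>'0: "\<mu>' \<noteq> 0" using c'v h(3) by auto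
      define q where "q = P (c'(r:=x))"
      define w where "w = q - of_real (Re q)"
      have wr: "Re w = 0" by (simp add: w_def)
      have w0: "w \<noteq> 0" using h(4) unfolding w_def q_def isr_def by (auto simp: quat_eq_iff)
      have "range P = UNIV"
      proof (rule surj_def[THEN iffD2], rule allI)
        fix z :: quat
        define t where "t = Re z"
        define v where "v = z - of_real t"
        have vr: "Re v = 0" by (simp add: v_def t_def)
        obtain \<gamma> u u' where g: "u * u' = 1" "u' * u = 1" "u * (\<gamma> *\<^sub>R w) * u' = v"
          using rot[OF wr w0 vr] by blast
        define A where "A = t / \<mu>' - \<gamma> * Re q / \<mu>'"
        have "P (c'(r := A *\<^sub>R c' r + \<gamma> *\<^sub>R x)) = A *\<^sub>R P (c'(r := c' r)) + \<gamma> *\<^sub>R q"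
          unfolding P_def q_def by (simp add: mpoly_slot[OF h(1)] mpoly_scale[OF h(1)])
        also have "\<dots> = of_real t + \<gamma> *\<^sub>R w"
          using \<mu>'0 c'v unfolding A_def w_def
          by (simp add: quat_eq_iff algebra_simps diff_divide_distrib)
        finally have Ly: "P (c'(r := A *\<^sub>R c' r + \<gamma> *\<^sub>R x)) = of_real t + \<gamma> *\<^sub>R w" .
        have "u * (of_real t + \<gamma> *\<^sub>R w) * u' = z"
        proof -
          have "u * (of_real t + \<gamma> *\<^sub>R w) * u' = of_real t * (u * u') + u * (\<gamma> *\<^sub>R w) * u'"
            by (simp add: algebra_simps of_real_comm mult.assoc)
          also have "\<dots> = z" using g by (simp add: v_def)
          finally show ?thesis .
        qed
        then have "z \<in> range P" using conj[OF g(1,2)] Ly by metis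
        then show "\<exists>a. z = P a" by auto
      qed
      then show ?thesis using S by simp
    next
      case False
      have rig: "isr (mpoly_eval m c (c'(r:=x)))"
        if "r < m" "isr (mpoly_eval m c c')" "mpoly_eval m c c' \<noteq> 0" for c' r x
        using False that unfolding P_def by blast
      have allr: "isr (P a)" for a
        using rigid_all[where m=m and c=c, OF rig b[unfolded P_def]] unfolding P_def by blast
      have "range P = scalar_quats"
      proof
        show "range P \<subseteq> scalar_quats" using allr isr_of_real by (auto simp: scalar_quats_def)
        show "scalar_quats \<subseteq> range P"
        proof
          fix z assume "z \<in> scalar_quats"
          then obtain t where z: "z = of_real t" by (auto simp: scalar_quats_def)
          have "(t / \<mu>) *\<^sub>R P b = z" using b z by (simp add: quat_eq_iff)
          then show "z \<in> range P" using scale by metis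
        qed
      qed
      then show ?thesis using S by simp
    qed
  qed
qed


end
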